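(* Let $X,Y$ be Banach spaces, $f:X\to Y$ a function, $G:X\rightrightarrows Y$ a multifunction and $\overline{x}\in X$ such that $0\in f(\overline{x})+G(\overline{x})$. If $f$ is calm at $\overline{x}$, then $(f,G)$ is locally sum-stable around $(\overline{x},f(\overline{x}),-f(\overline{x}))$.
   Context: $f$ is calm at $\overline{x}$ if there exist $\alpha,l>0$ with $\|f(x)-f(\overline{x})\|\le l\|x-\overline{x}\|$ for all $x\in B(\overline{x},\alpha)$ ($B$ the open ball). For multifunctions $F,G:X\rightrightarrows Y$ and $(\overline{x},\overline{y},\overline{z})$ with $\overline{y}\in F(\overline{x})$, $\overline{z}\in G(\overline{x})$, the pair $(F,G)$ is locally sum-stable around $(\overline{x},\overline{y},\overline{z})$ if for every $\varepsilon>0$ there is $\delta>0$ such that for every $x\in B(\overline{x},\delta)$ and every $w\in(F+G)(x)\cap B(\overline{y}+\overline{z},\delta)$ there exist $y\in F(x)\cap B(\overline{y},\varepsilon)$ and $z\in G(x)\cap B(\overline{z},\varepsilon)$ with $w=y+z$. A function $f$ is viewed as the multifunction $x\mapsto\{f(x)\}$. *)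

theory Defs
  imports "HOL-Analysis.Analysis"
begin

definition calm_at :: "('a::real_normed_vector \<Rightarrow> 'b::real_normed_vector) \<Rightarrow> 'a \<Rightarrow> bool" where
  "calm_at f xb \<longleftrightarrow> (\<exists>\<alpha>>0. \<exists>l>0. \<forall>x\<in>ball xb \<alpha>. norm (f x - f xb) \<le> l * norm (x - xb))"

definition msum :: "('a \<Rightarrow> 'b::plus set) \<Rightarrow> ('a \<Rightarrow> 'b set) \<Rightarrow> 'a \<Rightarrow> 'b set" where
  "msum F G x = {y + z | y z. y \<in> F x \<and> z \<in> G x}"

definition locally_sum_stable ::
  "('a::metric_space \<Rightarrow> 'b::real_normed_vector set) \<Rightarrow> ('a \<Rightarrow> 'b set) \<Rightarrow> 'a \<Rightarrow> 'b \<Rightarrow> 'b \<Rightarrow> bool" where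
  "locally_sum_stable F G xb yb zb \<longleftrightarrow>
     (\<forall>\<epsilon>>0. \<exists>\<delta>>0. \<forall>x\<in>ball xb \<delta>. \<forall>w \<in> msum F G x \<inter> ball (yb + zb) \<delta>.
        \<exists>y\<in>F x \<inter> ball yb \<epsilon>. \<exists>z\<in>G x \<inter> ball zb \<epsilon>. w = y + z)"

end

theory Submission
  imports Defs
begin

theorem proposition4p6:
  fixes f :: "'a::banach \<Rightarrow> 'b::banach"
    and G :: "'a \<Rightarrow> 'b set"
    and xb :: 'a
  assumes "0 \<in> msum (\<lambda>x. {f x}) G xb"
    and "calm_at f xb"
  shows "locally_sum_stable (\<lambda>x. {f x}) G xb (f xb) (- f xb)"
proof -
  obtain \<alpha> l where a: "\<alpha> > 0" and l: "l > 0"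
    and c: "\<And>x. x \<in> ball xb \<alpha> \<Longrightarrow> norm (f x - f xb) \<le> l * norm (x - xb)"
    using assms(2) unfolding calm_at_def by blast
  show ?thesis unfolding locally_sum_stable_def
  proof (intro allI impI)
    fix e :: real assume e: "e > 0"
    define d where "d = min \<alpha> (e/(l+1))"
    have d: "d > 0" using a e l by (simp add: d_def)
    have "d \<le> e/(l+1)" by (simp add: d_def)
    hence dle: "d * (l+1) \<le> e" using l by (simp add: pos_le_divide_eq)
    show "\<exists>d>0. \<forall>x\<in>ball xb d. \<forall>w\<in>msum (\<lambda>x. {f x}) G x \<inter> ball (f xb + - f xb) d.
        \<exists>y\<in>{f x} \<inter> ball (f xb) e. \<exists>z\<in>G x \<inter> ball (- f xb) e. w = y + z"
    proof (intro exI[of _ d] conjI ballI d)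
      fix x w assume x: "x \<in> ball xb d"
        and w: "w \<in> msum (\<lambda>x. {f x}) G x \<inter> ball (f xb + - f xb) d"
      from w obtain z where z: "z \<in> G x" "w = f x + z" and wn: "norm w < d"
        unfolding msum_def by (auto simp: dist_norm)
      have xa: "x \<in> ball xb \<alpha>" using x by (auto simp: d_def)
      have nx: "norm (x - xb) < d" using x by (simp add: dist_norm norm_minus_commute)
      have cf: "norm (f x - f xb) \<le> l * norm (x - xb)" using c[OF xa] .
      have "l * norm (x - xb) \<le> l * d" using nx l by (simp add: mult_left_mono)
      hence cf2: "norm (f x - f xb) \<le> l * d" using cf by linarith
      have "l * d < e" using dle d by (simp add: algebra_simps)
      hence y: "f x \<in> ball (f xb) e" using cf2 by (simp add: dist_norm norm_minus_commute)
      have "z - (- f xb) = w - (f x - f xb)" using z by (simp add: algebra_simps)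
      hence "norm (z - (- f xb)) \<le> norm w + norm (f x - f xb)"
        by (metis norm_triangle_ineq4)
      also have "\<dots> < d + l * d" using wn cf2 by linarith
      also have "\<dots> \<le> e" using dle by (simp add: algebra_simps)
      finally have "z \<in> ball (- f xb) e" by (simp add: dist_norm norm_minus_commute)
      thus "\<exists>y\<in>{f x} \<inter> ball (f xb) e. \<exists>z\<in>G x \<inter> ball (- f xb) e. w = y + z"
        using y z by blast
    qed
  qed
qed

end
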